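(* Let $m, n \ge 0$ be integers. If each of the $2 \times m$ and $2 \times n$ Domineering boards has outcome ${\rm 2nd}$ or $V$, then the $2 \times (m+n+1)$ board has outcome ${\rm 1st}$ or $V$ (i.e. Vera wins the $2\times(m+n+1)$ board whenever she moves first).
   Context: Domineering on an $a \times b$ board (a rectangle of $a$ rows and $b$ columns of unit cells): two players, Vera and Hepzibah, alternately place dominoes on empty cells; Vera places vertical dominoes (covering two vertically adjacent empty cells), Hepzibah places horizontal dominoes (covering two horizontally adjacent empty cells). A player who cannot move on her turn loses. The outcome class is $V$ if Vera wins with optimal play regardless of who moves first, $H$ if Hepzibah wins regardless of who moves first, ${\rm 1st}$ if the first player wins, and ${\rm 2nd}$ if the second player wins. The $2\times 0$ board is the empty board. *)

theory Defs
  imports Main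
begin

text \<open>Domineering. A position is the set of empty cells (row, column).
  Vera places vertical dominoes, Hepzibah horizontal ones.\<close>

datatype player = Vera | Hepzibah

fun other :: "player \<Rightarrow> player" where
  "other Vera = Hepzibah"
| "other Hepzibah = Vera"

type_synonym pos = "(nat \<times> nat) set"

fun move :: "player \<Rightarrow> pos \<Rightarrow> pos \<Rightarrow> bool" where
  "move Vera S S' = (\<exists>i j. (i, j) \<in> S \<and> (Suc i, j) \<in> S \<and> S' = S - {(i, j), (Suc i, j)})"
| "move Hepzibah S S' = (\<exists>i j. (i, j) \<in> S \<and> (i, Suc j) \<in> S \<and> S' = S - {(i, j), (i, Suc j)})"

text \<open>wins p q S: player p has a winning strategy in position S when player q is to move
  (a player unable to move on her turn loses).\<close>
inductive wins :: "player \<Rightarrow> player \<Rightarrow> pos \<Rightarrow> bool" where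
  win_move: "move p S S' \<Longrightarrow> wins p (other p) S' \<Longrightarrow> wins p p S"
| win_reply: "q \<noteq> p \<Longrightarrow> (\<And>S'. move q S S' \<Longrightarrow> wins p p S') \<Longrightarrow> wins p q S"

definition board :: "nat \<Rightarrow> nat \<Rightarrow> pos" where
  "board a b = {(i, j). i < a \<and> j < b}"

definition outcome_V :: "pos \<Rightarrow> bool" where
  "outcome_V S \<longleftrightarrow> wins Vera Vera S \<and> wins Vera Hepzibah S"
definition outcome_H :: "pos \<Rightarrow> bool" where
  "outcome_H S \<longleftrightarrow> wins Hepzibah Vera S \<and> wins Hepzibah Hepzibah S"
definition outcome_1st :: "pos \<Rightarrow> bool" where
  "outcome_1st S \<longleftrightarrow> wins Vera Vera S \<and> wins Hepzibah Hepzibah S"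
definition outcome_2nd :: "pos \<Rightarrow> bool" where
  "outcome_2nd S \<longleftrightarrow> wins Vera Hepzibah S \<and> wins Hepzibah Vera S"

end

theory Submission
  imports Defs
begin

lemma winsVH_inv: "wins Vera Hepzibah S \<Longrightarrow> move Hepzibah S S' \<Longrightarrow> wins Vera Vera S'"
  by (erule wins.cases) auto

lemma winsVV_inv: "wins Vera Vera S \<Longrightarrow> \<exists>S'. move Vera S S' \<and> wins Vera Hepzibah S'"
  by (erule wins.cases) auto

lemma move_card: "move p S S' \<Longrightarrow> finite S \<Longrightarrow> finite S' \<and> card S' < card S"
  by (cases p) (auto intro!: psubset_card_mono)

lemma determ: "finite S \<Longrightarrow> wins q q S \<or> wins (other q) q S"
proof (induction "card S" arbitrary: S q rule: less_induct)
  case less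
  show ?case
  proof (cases "\<exists>S'. move q S S' \<and> wins q (other q) S'")
    case True
    then obtain S' where "move q S S'" "wins q (other q) S'" by blast
    then have "wins q q S" by (rule win_move)
    then show ?thesis by (rule disjI1)
  next
    case False
    have "wins (other q) (other q) S'" if "move q S S'" for S'
    proof -
      from move_card[OF that less.prems] have f: "finite S'" "card S' < card S" by auto
      have oo: "other (other q) = q" by (cases q) auto
      have "wins (other q) (other q) S' \<or> wins q (other q) S'"
        using less.hyps[OF f(2) f(1), of "other q"] unfolding oo .
      then show ?thesis using False that by blast
    qed
    then have "wins (other q) q S"
    proof (rule win_reply[rotated])
      show "q \<noteq> other q" by (cases q) auto
    qed
    then show ?thesis by blast
  qed
qed

definition adj :: "nat \<times> nat \<Rightarrow> nat \<times> nat \<Rightarrow> bool" where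
  "adj x y \<longleftrightarrow> (fst y = Suc (fst x) \<and> snd x = snd y) \<or> (fst x = fst y \<and> snd y = Suc (snd x))"

definition sep :: "pos \<Rightarrow> pos \<Rightarrow> bool" where
  "sep A B \<longleftrightarrow> (\<forall>x\<in>A. \<forall>y\<in>B. x \<noteq> y \<and> \<not> adj x y \<and> \<not> adj y x)"

lemma sep_sym: "sep A B \<Longrightarrow> sep B A"
  unfolding sep_def by blast

lemma sep_mono: "sep A B \<Longrightarrow> A' \<subseteq> A \<Longrightarrow> B' \<subseteq> B \<Longrightarrow> sep A' B'"
  unfolding sep_def by blast

lemma sum_lemma:
  "finite A \<Longrightarrow> finite B \<Longrightarrow> sep A B \<Longrightarrow>
    (wins Vera Hepzibah A \<longrightarrow> wins Vera Hepzibah B \<longrightarrow> wins Vera Hepzibah (A \<union> B)) \<and>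
    (wins Vera Vera A \<longrightarrow> wins Vera Hepzibah B \<longrightarrow> wins Vera Vera (A \<union> B)) \<and>
    (wins Vera Hepzibah A \<longrightarrow> wins Vera Vera B \<longrightarrow> wins Vera Vera (A \<union> B))"
proof (induction "card A + card B" arbitrary: A B rule: less_induct)
  case less
  note fA = less.prems(1) and fB = less.prems(2) and sAB = less.prems(3)
  have ii: "wins Vera Vera (A \<union> B)" if "wins Vera Vera A" "wins Vera Hepzibah B"
  proof -
    from winsVV_inv[OF that(1)] obtain A' where A': "move Vera A A'" "wins Vera Hepzibah A'" by blast
    then obtain i j where ij: "(i,j) \<in> A" "(Suc i, j) \<in> A" "A' = A - {(i,j),(Suc i,j)}" by auto
    have nB: "(i,j) \<notin> B" "(Suc i, j) \<notin> B" using ij sAB unfolding sep_def by blast+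
    have mv: "move Vera (A \<union> B) (A' \<union> B)" using ij nB by auto
    have c: "card A' < card A" "finite A'" using move_card[OF A'(1) fA] by auto
    have sp: "sep A' B" by (rule sep_mono[OF sAB]) (auto simp: ij(3))
    have lt: "card A' + card B < card A + card B" using c by simp
    have "wins Vera Hepzibah (A' \<union> B)" using less.hyps[OF lt c(2) fB sp] A'(2) that(2) by blast
    then show ?thesis using win_move[OF mv] by simp
  qed
  have iii: "wins Vera Vera (A \<union> B)" if "wins Vera Hepzibah A" "wins Vera Vera B"
  proof -
    from winsVV_inv[OF that(2)] obtain B' where B': "move Vera B B'" "wins Vera Hepzibah B'" by blast
    then obtain i j where ij: "(i,j) \<in> B" "(Suc i, j) \<in> B" "B' = B - {(i,j),(Suc i,j)}" by auto
    have nA: "(i,j) \<notin> A" "(Suc i, j) \<notin> A" using ij sAB unfolding sep_def by blast+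
    have mv: "move Vera (A \<union> B) (A \<union> B')" using ij nA by auto
    have c: "card B' < card B" "finite B'" using move_card[OF B'(1) fB] by auto
    have sp: "sep A B'" by (rule sep_mono[OF sAB]) (auto simp: ij(3))
    have lt: "card A + card B' < card A + card B" using c by simp
    have "wins Vera Hepzibah (A \<union> B')" using less.hyps[OF lt fA c(2) sp] B'(2) that(1) by blast
    then show ?thesis using win_move[OF mv] by simp
  qed
  have i: "wins Vera Hepzibah (A \<union> B)" if hA: "wins Vera Hepzibah A" and hB: "wins Vera Hepzibah B"
  proof (rule win_reply)
    fix T assume "move Hepzibah (A \<union> B) T"
    then obtain i j where ij: "(i,j) \<in> A \<union> B" "(i, Suc j) \<in> A \<union> B" "T = (A \<union> B) - {(i,j),(i,Suc j)}" by auto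
    have ad: "adj (i,j) (i,Suc j)" unfolding adj_def by simp
    have "((i,j) \<in> A \<and> (i, Suc j) \<in> A) \<or> ((i,j) \<in> B \<and> (i, Suc j) \<in> B)"
      using ij(1,2) sAB ad unfolding sep_def by blast
    then show "wins Vera Vera T"
    proof
      assume a: "(i,j) \<in> A \<and> (i, Suc j) \<in> A"
      define A' where "A' = A - {(i,j),(i,Suc j)}"
      have nB: "(i,j) \<notin> B" "(i, Suc j) \<notin> B" using a sAB unfolding sep_def by blast+
      have T: "T = A' \<union> B" using ij(3) nB unfolding A'_def by auto
      have mv: "move Hepzibah A A'" using a unfolding A'_def by auto
      have c: "card A' < card A" "finite A'" using move_card[OF mv fA] by auto
      have sp: "sep A' B" by (rule sep_mono[OF sAB]) (auto simp: A'_def)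
      have lt: "card A' + card B < card A + card B" using c by simp
      show ?thesis using less.hyps[OF lt c(2) fB sp] winsVH_inv[OF hA mv] hB unfolding T by blast
    next
      assume a: "(i,j) \<in> B \<and> (i, Suc j) \<in> B"
      define B' where "B' = B - {(i,j),(i,Suc j)}"
      have nA: "(i,j) \<notin> A" "(i, Suc j) \<notin> A" using a sAB unfolding sep_def by blast+
      have T: "T = A \<union> B'" using ij(3) nA unfolding B'_def by auto
      have mv: "move Hepzibah B B'" using a unfolding B'_def by auto
      have c: "card B' < card B" "finite B'" using move_card[OF mv fB] by auto
      have sp: "sep A B'" by (rule sep_mono[OF sAB]) (auto simp: B'_def)
      have lt: "card A + card B' < card A + card B" using c by simp
      show ?thesis using less.hyps[OF lt fA c(2) sp] winsVH_inv[OF hB mv] hA unfolding T by blast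
    qed
  qed simp
  show ?case by (intro conjI impI) (simp_all add: i ii iii)
qed

definition sh :: "nat \<Rightarrow> pos \<Rightarrow> pos" where
  "sh k S = (\<lambda>(i,j). (i, j + k)) ` S"

lemma sh_inj: "inj (\<lambda>(i::nat,j::nat). (i, j + k))"
  by (auto simp: inj_def)

lemma sh_diff: "sh k (A - B) = sh k A - sh k B"
  unfolding sh_def by (rule image_set_diff[OF sh_inj])

lemma sh_mem: "((i, j) \<in> sh k S) = (k \<le> j \<and> (i, j - k) \<in> S)"
proof
  assume "(i, j) \<in> sh k S"
  then obtain a b where "(a, b) \<in> S" "(i, j) = (a, b + k)" unfolding sh_def by auto
  then show "k \<le> j \<and> (i, j - k) \<in> S" by simp
next
  assume h: "k \<le> j \<and> (i, j - k) \<in> S"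
  have e: "(i, j) = (\<lambda>(i,j). (i, j + k)) (i, j - k)" using h by simp
  show "(i, j) \<in> sh k S" unfolding sh_def using h by (intro image_eqI[where x="(i, j - k)" and f="\<lambda>(i,j). (i, j + k)"]) auto
qed

lemma sh_ins: "sh k {(a,b),(c,d)} = {(a, b+k), (c, d+k)}"
  unfolding sh_def by simp

lemma move_sh_fwd: "move p S S' \<Longrightarrow> move p (sh k S) (sh k S')"
proof (cases p)
  case Vera
  assume "move p S S'"
  then obtain i j where ij: "(i,j) \<in> S" "(Suc i, j) \<in> S" "S' = S - {(i,j),(Suc i,j)}" using Vera by auto
  then have "(i,j+k) \<in> sh k S" "(Suc i, j+k) \<in> sh k S" "sh k S' = sh k S - {(i,j+k),(Suc i,j+k)}"
    by (auto simp: sh_mem sh_diff sh_ins)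
  then show ?thesis using Vera by auto
next
  case Hepzibah
  assume "move p S S'"
  then obtain i j where ij: "(i,j) \<in> S" "(i, Suc j) \<in> S" "S' = S - {(i,j),(i,Suc j)}" using Hepzibah by auto
  then have "(i,j+k) \<in> sh k S" "(i, Suc (j+k)) \<in> sh k S" "sh k S' = sh k S - {(i,j+k),(i,Suc (j+k))}"
    by (auto simp: sh_mem sh_diff sh_ins)
  then show ?thesis using Hepzibah by auto
qed

lemma move_sh_bwd: "move p (sh k S) T \<Longrightarrow> \<exists>S'. move p S S' \<and> T = sh k S'"
proof (cases p)
  case Vera
  assume "move p (sh k S) T"
  then obtain i j where ij: "(i,j) \<in> sh k S" "(Suc i, j) \<in> sh k S" "T = sh k S - {(i,j),(Suc i,j)}"
    using Vera by auto
  then have "k \<le> j" "(i, j-k) \<in> S" "(Suc i, j-k) \<in> S" by (auto simp: sh_mem)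
  moreover have "T = sh k (S - {(i, j-k),(Suc i, j-k)})" using ij(3) \<open>k \<le> j\<close> by (simp add: sh_diff sh_ins)
  ultimately show ?thesis using Vera by auto
next
  case Hepzibah
  assume "move p (sh k S) T"
  then obtain i j where ij: "(i,j) \<in> sh k S" "(i, Suc j) \<in> sh k S" "T = sh k S - {(i,j),(i,Suc j)}"
    using Hepzibah by auto
  then have "k \<le> j" "(i, j-k) \<in> S" "(i, Suc (j-k)) \<in> S" by (auto simp: sh_mem Suc_diff_le)
  moreover have "T = sh k (S - {(i, j-k),(i, Suc (j-k))})" using ij(3) \<open>k \<le> j\<close> by (simp add: sh_diff sh_ins)
  ultimately show ?thesis using Hepzibah by auto
qed

lemma wins_sh: "wins p q S \<Longrightarrow> wins p q (sh k S)"
proof (induction rule: wins.induct)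
  case (win_move p S S')
  then show ?case using move_sh_fwd by (blast intro: wins.win_move)
next
  case (win_reply q p S)
  show ?case
  proof (rule wins.win_reply)
    fix T assume "move q (sh k S) T"
    then obtain S' where "move q S S'" "T = sh k S'" using move_sh_bwd by blast
    then show "wins p p T" using win_reply.IH by blast
  qed (rule win_reply.hyps)
qed

lemma board_split: "board 2 (m + n + 1) - {(0, m), (1, m)} = board 2 m \<union> sh (m + 1) (board 2 n)"
proof (rule set_eqI)
  fix x :: "nat \<times> nat"
  obtain i j where x: "x = (i, j)" by fastforce
  show "x \<in> board 2 (m + n + 1) - {(0, m), (1, m)} \<longleftrightarrow> x \<in> board 2 m \<union> sh (m + 1) (board 2 n)"
    by (auto simp: x sh_mem board_def)
qed

lemma board_sep: "sep (board 2 m) (sh (m + 1) (board 2 n))"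
  unfolding sep_def
proof (intro ballI)
  fix x y assume x: "x \<in> board 2 m" and y: "y \<in> sh (m + 1) (board 2 n)"
  obtain a b where ab: "x = (a, b)" by fastforce
  obtain c d where cd: "y = (c, d)" by fastforce
  have "b < m" using x by (simp add: ab board_def)
  moreover have "m + 1 \<le> d" using y by (simp add: cd sh_mem)
  ultimately show "x \<noteq> y \<and> \<not> adj x y \<and> \<not> adj y x" by (auto simp: ab cd adj_def)
qed

lemma board_fin: "finite (board a b)"
proof -
  have "board a b \<subseteq> {..<a} \<times> {..<b}" unfolding board_def by auto
  then show ?thesis by (rule finite_subset) auto
qed

theorem mainTheorem9:
  fixes m n :: nat
  assumes "outcome_2nd (board 2 m) \<or> outcome_V (board 2 m)"
      and "outcome_2nd (board 2 n) \<or> outcome_V (board 2 n)"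
  shows "outcome_1st (board 2 (m + n + 1)) \<or> outcome_V (board 2 (m + n + 1))"
proof -
  have A: "wins Vera Hepzibah (board 2 m)" using assms(1) unfolding outcome_2nd_def outcome_V_def by blast
  have B0: "wins Vera Hepzibah (board 2 n)" using assms(2) unfolding outcome_2nd_def outcome_V_def by blast
  have B: "wins Vera Hepzibah (sh (m+1) (board 2 n))" by (rule wins_sh[OF B0])
  have fB: "finite (sh (m+1) (board 2 n))" unfolding sh_def by (rule finite_imageI[OF board_fin])
  have U: "wins Vera Hepzibah (board 2 (m + n + 1) - {(0, m), (1, m)})"
    unfolding board_split using sum_lemma[OF board_fin fB board_sep] A B by blast
  have mv: "move Vera (board 2 (m + n + 1)) (board 2 (m + n + 1) - {(0, m), (1, m)})"
    unfolding board_def move.simps by (rule exI[of _ 0], rule exI[of _ m]) auto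
  have W: "wins Vera Vera (board 2 (m + n + 1))" using win_move[OF mv] U by simp
  have "wins Hepzibah Hepzibah (board 2 (m + n + 1)) \<or> wins Vera Hepzibah (board 2 (m + n + 1))"
    using determ[OF board_fin, of Hepzibah] by simp
  then show ?thesis using W unfolding outcome_1st_def outcome_V_def by blast
qed

end
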